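(* Let $k\in\mathbb N$. Every $k$-ary dependency notion $\mathbf D$ is $\gamma$-bounded for $\gamma(n)=n^k$; that is, for every finite structure $\mathfrak M$ with domain $M$, every team $X$ and every $k$-tuple $\vec v$ of variables in the domain of $X$, if $\mathfrak M\models_X\mathbf D\vec v$ then there is $Y\subseteq X$ with $|Y|\le|M|^k$ and $\mathfrak M\models_Y\mathbf D\vec v$.
   Context: For a structure $\mathfrak M$ with domain $M$, a team $X$ is a set of assignments $s:V\to M$, $V$ a finite set of variables; for a tuple $\vec v$ in $V$, $X(\vec v)=\{s(\vec v):s\in X\}$. A $k$-ary dependency notion $\mathbf D$ is an isomorphism-closed class of structures $(M,R)$ with $R$ a $k$-ary relation on $M$, and $\mathfrak M\models_X\mathbf D\vec v$ iff $(M,X(\vec v))\in\mathbf D$. *)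

theory Defs
  imports Main
begin

definition team :: "'a set \<Rightarrow> 'v set \<Rightarrow> ('v \<rightharpoonup> 'a) set \<Rightarrow> bool" where
  "team M V X \<longleftrightarrow> finite V \<and> (\<forall>s\<in>X. dom s = V \<and> ran s \<subseteq> M)"

text \<open>X(v) = {s(v) : s in X}; k-tuples are lists of length k.\<close>
definition team_rel :: "('v \<rightharpoonup> 'a) set \<Rightarrow> 'v list \<Rightarrow> 'a list set" where
  "team_rel X vs = {map (\<lambda>x. the (s x)) vs | s. s \<in> X}"

definition dependency_notion :: "nat \<Rightarrow> ('a set \<times> 'a list set) set \<Rightarrow> bool" where
  "dependency_notion k D \<longleftrightarrow>
     (\<forall>M R. (M, R) \<in> D \<longrightarrow> R \<subseteq> {xs. length xs = k \<and> set xs \<subseteq> M}) \<and>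
     (\<forall>M R M' f. (M, R) \<in> D \<longrightarrow> bij_betw f M M' \<longrightarrow> (M', map f ` R) \<in> D)"

definition dep_sat :: "('a set \<times> 'a list set) set \<Rightarrow> 'a set \<Rightarrow> ('v \<rightharpoonup> 'a) set \<Rightarrow> 'v list \<Rightarrow> bool" where
  "dep_sat D M X vs \<longleftrightarrow> (M, team_rel X vs) \<in> D"

end

theory Submission
  imports Defs
begin

theorem mainTheorem12:
  fixes k :: nat and D :: "('a set \<times> 'a list set) set" and M :: "'a set"
    and V :: "'v set" and X :: "('v \<rightharpoonup> 'a) set" and vs :: "'v list"
  assumes "dependency_notion k D"
    and "finite M"
    and "team M V X"
    and "length vs = k" and "set vs \<subseteq> V"
    and "dep_sat D M X vs"
  shows "\<exists>Y\<subseteq>X. card Y \<le> card M ^ k \<and> dep_sat D M Y vs"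
proof -
  define R where "R = team_rel X vs"
  have RD: "(M, R) \<in> D" using assms(6) by (simp add: dep_sat_def R_def)
  have Rsub: "R \<subseteq> {xs. set xs \<subseteq> M \<and> length xs = k}"
    using assms(1) RD unfolding dependency_notion_def by blast
  have finL: "finite {xs. set xs \<subseteq> M \<and> length xs = k}"
    using finite_lists_length_eq[OF assms(2)] by simp
  have finR: "finite R" using Rsub finL finite_subset by blast
  have cardR: "card R \<le> card M ^ k"
    using card_mono[OF finL Rsub] card_lists_length_eq[OF assms(2)] by simp
  define g where "g r = (SOME s. s \<in> X \<and> map (\<lambda>x. the (s x)) vs = r)" for r
  have g: "g r \<in> X \<and> map (\<lambda>x. the (g r x)) vs = r" if "r \<in> R" for r
  proof -
    have "\<exists>s. s \<in> X \<and> map (\<lambda>x. the (s x)) vs = r" using that by (auto simp: R_def team_rel_def)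
    then show ?thesis unfolding g_def by (rule someI_ex)
  qed
  define Y where "Y = g ` R"
  have "Y \<subseteq> X" using g by (auto simp: Y_def)
  moreover have "card Y \<le> card M ^ k"
    using card_image_le[OF finR, of g] cardR by (simp add: Y_def)
  moreover have "team_rel Y vs = R"
  proof
    show "team_rel Y vs \<subseteq> R" using g by (auto simp: team_rel_def Y_def)
    show "R \<subseteq> team_rel Y vs"
    proof
      fix r assume "r \<in> R"
      then have "g r \<in> Y" "map (\<lambda>x. the (g r x)) vs = r" using g by (auto simp: Y_def)
      then show "r \<in> team_rel Y vs" unfolding team_rel_def by force
    qed
  qed
  ultimately show ?thesis using RD by (auto simp: dep_sat_def)
qed

end
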